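(* Let $Y,Z$ be the Pauli matrices and let $\alpha\in\mathbb{R}$ satisfy $\cos(\pi\alpha) \in \mathbb{Q}\setminus\{0,\pm 1,\pm 1/2\}$. Let $\mathcal{A}_2=\{g_1,g_2\}=\{e^{i\pi\alpha Z}, e^{i\pi\alpha Y}\}\subset SU(2)$, and for $U\in SU(2)$ and $\epsilon>0$ define the gate complexity $$C_\epsilon(U)=\min\Big\{\sum_{j=1}^k |n_j| : \|g_{i_1}^{n_1}g_{i_2}^{n_2}\cdots g_{i_k}^{n_k}-U\|<\epsilon\Big\},$$ the minimum being over all $k\in\mathbb{N}$, $i_j\in\{1,2\}$ and $n_1,\dots,n_k\in\mathbb{Z}$, where $\|A\|=[\mathrm{Tr}(A^\dagger A)]^{1/2}$ is the Hilbert–Schmidt norm. Then for every $U\in SU(2)$ and every $\delta>0$ there exist $U'\in SU(2)$ with $\|U'-U\|<\delta$ and a constant $D=D(\alpha,U')>1$ such that $$C_\epsilon(U') > \frac{1}{\log D}\log\left(\frac{1}{\epsilon}\right)+\mathcal{O}(\epsilon^0)\quad\text{as }\epsilon\to 0,$$ i.e. there is a constant $c$ such that $C_\epsilon(U') > \frac{1}{\log D}\log(1/\epsilon)+c$ for all sufficiently small $\epsilon>0$.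
   Context: The group generated by $\mathcal{A}_2$ and inverses is dense in $SU(2)$, so $C_\epsilon(U)$ is finite for every $\epsilon>0$. *)

theory Defs
  imports "HOL-Analysis.Analysis"
begin

type_synonym cmat2 = "complex^2^2"

definition pauliY :: cmat2 where
  "pauliY = (\<chi> i j. if i = j then 0 else if i = 1 then - \<i> else \<i>)"

definition pauliZ :: cmat2 where
  "pauliZ = (\<chi> i j. if i = j then (if i = 1 then 1 else -1) else 0)"

definition adj :: "cmat2 \<Rightarrow> cmat2" where
  "adj A = transpose (map_matrix cnj A)"

definition hs_norm :: "cmat2 \<Rightarrow> real" where
  "hs_norm A = sqrt (Re (trace (adj A ** A)))"

definition SU2 :: "cmat2 set" where
  "SU2 = {U. adj U ** U = mat 1 \<and> det U = 1}"

primrec mpow :: "cmat2 \<Rightarrow> nat \<Rightarrow> cmat2" where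
  "mpow A 0 = mat 1"
| "mpow A (Suc n) = A ** mpow A n"

definition minv :: "cmat2 \<Rightarrow> cmat2" where
  "minv A = (SOME B. A ** B = mat 1 \<and> B ** A = mat 1)"

definition mzpow :: "cmat2 \<Rightarrow> int \<Rightarrow> cmat2" where
  "mzpow A n = (if 0 \<le> n then mpow A (nat n) else mpow (minv A) (nat (- n)))"

definition mexp :: "cmat2 \<Rightarrow> cmat2" where
  "mexp A = (\<Sum>n. (1 / fact n) *\<^sub>R mpow A n)"

definition cscale :: "complex \<Rightarrow> cmat2 \<Rightarrow> cmat2" where
  "cscale c A = (\<chi> i j. c * A $ i $ j)"

definition gate :: "real \<Rightarrow> nat \<Rightarrow> cmat2" where
  "gate \<alpha> i = (if i = 1 then mexp (cscale (\<i> * complex_of_real (pi * \<alpha>)) pauliZ)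
                else mexp (cscale (\<i> * complex_of_real (pi * \<alpha>)) pauliY))"

text \<open>A word is a list of pairs (i_j, n_j); it denotes g_{i_1}^{n_1} ... g_{i_k}^{n_k}.\<close>
definition word_prod :: "real \<Rightarrow> (nat \<times> int) list \<Rightarrow> cmat2" where
  "word_prod \<alpha> ws = foldr (\<lambda>(i, n) M. mzpow (gate \<alpha> i) n ** M) ws (mat 1)"

definition word_cost :: "(nat \<times> int) list \<Rightarrow> nat" where
  "word_cost ws = sum_list (map (\<lambda>(i, n). nat \<bar>n\<bar>) ws)"

definition gate_complexity :: "real \<Rightarrow> real \<Rightarrow> cmat2 \<Rightarrow> nat" where
  "gate_complexity \<alpha> \<epsilon> U =
     (LEAST c. \<exists>ws. set ws \<subseteq> {1, 2} \<times> UNIV \<and> word_cost ws = c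
                    \<and> hs_norm (word_prod \<alpha> ws - U) < \<epsilon>)"

end

theory Submission
  imports Defs
begin
definition mk :: "complex \<Rightarrow> complex \<Rightarrow> complex \<Rightarrow> complex \<Rightarrow> cmat2" where
  "mk a b c d = (\<chi> i j. if i = 1 then (if j = 1 then a else b) else (if j = 1 then c else d))"

lemma mk_nth [simp]:
  "mk a b c d $ 1 $ 1 = a" "mk a b c d $ 1 $ 2 = b" "mk a b c d $ 2 $ 1 = c" "mk a b c d $ 2 $ 2 = d"
  by (simp_all add: mk_def)

lemma mat_eq_iff2: "(A::cmat2) = B \<longleftrightarrow> A$1$1 = B$1$1 \<and> A$1$2 = B$1$2 \<and> A$2$1 = B$2$1 \<and> A$2$2 = B$2$2"
  by (auto simp: vec_eq_iff forall_2)

lemma mk_entries: "(A::cmat2) = mk (A$1$1) (A$1$2) (A$2$1) (A$2$2)"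
  by (simp add: mat_eq_iff2)

lemma mk_eq_iff [simp]: "mk a b c d = mk a' b' c' d' \<longleftrightarrow> a = a' \<and> b = b' \<and> c = c' \<and> d = d'"
  by (simp add: mat_eq_iff2)

lemma mk_mult [simp]: "mk a b c d ** mk e f g h = mk (a*e + b*g) (a*f + b*h) (c*e + d*g) (c*f + d*h)"
  by (simp add: mat_eq_iff2 matrix_matrix_mult_def sum_2)

lemma mat1_mk: "(mat 1 :: cmat2) = mk 1 0 0 1"
  by (simp add: mat_eq_iff2 mat_def)

lemma mk_add [simp]: "mk a b c d + mk e f g h = mk (a+e) (b+f) (c+g) (d+h)"
  by (simp add: mat_eq_iff2)
lemma mk_diff [simp]: "mk a b c d - mk e f g h = mk (a-e) (b-f) (c-g) (d-h)"
  by (simp add: mat_eq_iff2)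
lemma mk_scaleR [simp]: "x *\<^sub>R mk a b c d = mk (x *\<^sub>R a) (x *\<^sub>R b) (x *\<^sub>R c) (x *\<^sub>R d)"
  by (simp add: mat_eq_iff2)
lemma mk_uminus [simp]: "- mk a b c d = mk (-a) (-b) (-c) (-d)"
  by (simp add: mat_eq_iff2)

lemma adj_mk [simp]: "adj (mk a b c d) = mk (cnj a) (cnj c) (cnj b) (cnj d)"
  by (simp add: mat_eq_iff2 adj_def transpose_def)

lemma det_mk [simp]: "det (mk a b c d) = a*d - b*c"
  by (simp add: det_2)

lemma trace_mk [simp]: "trace (mk a b c d) = a + d"
  by (simp add: trace_def sum_2)

lemma cmod_sq_cnj: "Re (cnj z * z) = (cmod z)^2"
  unfolding cmod_power2 by (simp add: power2_eq_square)

lemma hs_norm_mk: "hs_norm (mk a b c d) = sqrt ((cmod a)^2 + (cmod b)^2 + (cmod c)^2 + (cmod d)^2)"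
  unfolding hs_norm_def cmod_power2 by (simp add: power2_eq_square algebra_simps)

lemma hs_norm_entry11: "cmod (A $ 1 $ 1) \<le> hs_norm A"
proof -
  have "hs_norm A = sqrt ((cmod (A$1$1))^2 + (cmod (A$1$2))^2 + (cmod (A$2$1))^2 + (cmod (A$2$2))^2)"
    by (subst mk_entries, simp add: hs_norm_mk)
  also have "\<dots> \<ge> sqrt ((cmod (A$1$1))^2)" by (intro real_sqrt_le_mono) auto
  finally show ?thesis by simp
qed

lemma hs_norm_bound:
  assumes "cmod a < e" "cmod b < e" "cmod c < e" "cmod d < e"
  shows "hs_norm (mk a b c d) < 2 * e"
proof -
  have "e > 0" using assms(1) norm_ge_zero[of a] by linarith
  have "(cmod a)^2 < e^2" "(cmod b)^2 < e^2" "(cmod c)^2 < e^2" "(cmod d)^2 < e^2"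
    using assms by (auto intro!: power_strict_mono)
  then have "(cmod a)^2 + (cmod b)^2 + (cmod c)^2 + (cmod d)^2 < (2*e)^2" by (simp add: power2_eq_square)
  then show ?thesis unfolding hs_norm_mk using \<open>e > 0\<close>
    by (metis abs_of_pos mult_pos_pos real_sqrt_abs real_sqrt_less_iff zero_less_numeral)
qed

lemma sums_cmat2:
  fixes f :: "nat \<Rightarrow> cmat2"
  assumes "(\<lambda>n. f n $1$1) sums a" "(\<lambda>n. f n $1$2) sums b" "(\<lambda>n. f n $2$1) sums c" "(\<lambda>n. f n $2$2) sums d"
  shows "f sums mk a b c d"
proof -
  have h: "(\<lambda>n. (\<Sum>k<n. f k) $ i $ j) \<longlonglongrightarrow> mk a b c d $ i $ j" for i j
  proof -
    have e: "(\<Sum>k<n. f k) $ i $ j = (\<Sum>k<n. f k $ i $ j)" for n by (simp add: sum_component)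
    show ?thesis unfolding e using assms exhaust_2[of i] exhaust_2[of j] unfolding sums_def
      by auto
  qed
  show ?thesis unfolding sums_def
    by (intro vec_tendstoI) (use h in auto)
qed

lemma mexp_eq: "(\<lambda>n. (1 / fact n) *\<^sub>R mpow A n) sums L \<Longrightarrow> mexp A = L"
  unfolding mexp_def by (rule sums_unique[symmetric])

lemma mpow_diag: "mpow (mk x 0 0 y) n = mk (x^n) 0 0 (y^n)"
  by (induction n) (simp_all add: mat1_mk)

definition Dm :: "real \<Rightarrow> cmat2" where "Dm t = mk (cis t) 0 0 (cis (-t))"
definition Rm :: "real \<Rightarrow> cmat2" where "Rm t = mk (cos t) (sin t) (- sin t) (cos t)"

lemma gate1: "gate \<alpha> 1 = Dm (pi * \<alpha>)"
proof -
  have c: "cscale (\<i> * complex_of_real (pi * \<alpha>)) pauliZ = mk (\<i> * (pi*\<alpha>)) 0 0 (- (\<i> * (pi*\<alpha>)))"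
    by (simp add: mat_eq_iff2 cscale_def pauliZ_def)
  show ?thesis unfolding gate_def c Dm_def
    apply simp
    apply (rule mexp_eq)
    apply (simp add: mpow_diag)
    apply (rule sums_cmat2)
    using exp_converges[of "\<i> * complex_of_real (pi * \<alpha>)"] exp_converges[of "- (\<i> * complex_of_real (pi * \<alpha>))"]
    by (auto simp: cis_conv_exp scaleR_conv_of_real divide_inverse mult.commute)
qed

lemma mpow_rot: "mpow (mk 0 (complex_of_real x) (- complex_of_real x) 0) n =
   mk (Re ((\<i>*x)^n)) (Im ((\<i>*x)^n)) (- Im ((\<i>*x)^n)) (Re ((\<i>*x)^n))"
  by (induction n) (simp_all add: mat1_mk)

lemma gate2: "gate \<alpha> 2 = Rm (pi * \<alpha>)"
proof -
  let ?x = "pi * \<alpha>"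
  have c: "cscale (\<i> * complex_of_real (pi * \<alpha>)) pauliY = mk 0 (?x) (- ?x) 0"
    by (simp add: mat_eq_iff2 cscale_def pauliY_def complex_eq_iff)
  have e: "(\<lambda>n. (\<i> * complex_of_real ?x)^n /\<^sub>R fact n) sums exp (\<i> * ?x)" by (rule exp_converges)
  have re: "(\<lambda>n. Re ((\<i> * complex_of_real ?x)^n) / fact n) sums cos ?x"
    using sums_Re[OF e] by (simp add: Re_exp divide_inverse mult.commute)
  have im: "(\<lambda>n. Im ((\<i> * complex_of_real ?x)^n) / fact n) sums sin ?x"
    using sums_Im[OF e] by (simp add: Im_exp divide_inverse mult.commute)
  have g: "gate \<alpha> 2 = mexp (mk 0 (complex_of_real ?x) (- complex_of_real ?x) 0)"
    unfolding gate_def c by simp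
  show ?thesis unfolding g Rm_def
    apply (rule mexp_eq)
    unfolding mpow_rot mk_scaleR
    apply (rule sums_cmat2) unfolding mk_nth
    using sums_of_real[OF re, where 'a=complex] sums_of_real[OF im, where 'a=complex] sums_minus[OF sums_of_real[OF im, where 'a=complex]]
    by (auto simp: scaleR_conv_of_real divide_inverse mult.commute of_real_inverse of_real_fact)
qed

lemma Dm_inv: "Dm t ** Dm (-t) = mat 1" "Dm (-t) ** Dm t = mat 1"
  by (simp_all add: Dm_def mat1_mk cis_mult)

lemma Rm_inv: "Rm t ** Rm (-t) = mat 1" "Rm (-t) ** Rm t = mat 1"
  by (simp_all add: Rm_def mat1_mk flip: of_real_mult of_real_add)
     (simp_all add: power2_eq_square[symmetric] algebra_simps)

lemma minv_eq:
  assumes "A ** B = mat 1" "B ** A = mat 1"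
  shows "minv A = B"
  unfolding minv_def
proof (rule some_equality)
  show "A ** B = mat 1 \<and> B ** A = mat 1" using assms by simp
  fix C assume "A ** C = mat 1 \<and> C ** A = mat 1"
  then have "C = (B ** A) ** C" using assms(2) by simp
  also have "\<dots> = B" by (simp add: matrix_mul_assoc[symmetric] \<open>A ** C = mat 1 \<and> C ** A = mat 1\<close>)
  finally show "C = B" .
qed

lemma mpow_Dm: "mpow (Dm t) n = Dm (real n * t)"
  by (induction n) (simp_all add: Dm_def mat1_mk cis_mult algebra_simps)

lemma mpow_Rm: "mpow (Rm t) n = Rm (real n * t)"
  by (induction n) (simp_all add: Rm_def mat1_mk algebra_simps cos_add sin_add
      flip: of_real_mult of_real_add of_real_minus)

definition Gs :: "real \<Rightarrow> nat \<Rightarrow> real \<Rightarrow> cmat2" where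
  "Gs t i \<sigma> = (if i = 1 then Dm (\<sigma> * t) else Rm (\<sigma> * t))"

definition wp :: "real \<Rightarrow> real \<Rightarrow> (nat \<times> int) list \<Rightarrow> cmat2" where
  "wp t \<sigma> ws = foldr (\<lambda>(i, n) M. mpow (Gs t i (if 0 \<le> n then \<sigma> else - \<sigma>)) (nat \<bar>n\<bar>) ** M) ws (mat 1)"

lemma gate_Gs: "gate \<alpha> i = Gs (pi*\<alpha>) i 1"
proof (cases "i = 1")
  case True then show ?thesis using gate1[of \<alpha>] by (simp add: Gs_def)
next
  case False
  then have "gate \<alpha> i = gate \<alpha> 2" by (simp add: gate_def)
  then show ?thesis using False by (simp add: Gs_def gate2)
qed

lemma minv_Gs: "minv (Gs t i 1) = Gs t i (-1)"
  by (simp add: Gs_def minv_eq Dm_inv Rm_inv)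

lemma mzpow_gate: "mzpow (gate \<alpha> i) n = mpow (Gs (pi*\<alpha>) i (if 0 \<le> n then 1 else -1)) (nat \<bar>n\<bar>)"
  unfolding gate_Gs mzpow_def minv_Gs by simp

lemma word_prod_wp: "word_prod \<alpha> ws = wp (pi*\<alpha>) 1 ws"
  unfolding word_prod_def wp_def
  by (induction ws) (auto simp: mzpow_gate)

definition Em :: "real \<Rightarrow> real \<Rightarrow> real \<Rightarrow> cmat2" where
  "Em a b c = mk (cis (a+c) * cos b) (cis (a-c) * sin b) (- (cis (c-a) * sin b)) (cis (-(a+c)) * cos b)"

lemma DRD: "Dm a ** Rm b ** Dm c = Em a b c"
  by (simp add: Dm_def Rm_def Em_def cis_mult algebra_simps)

lemma word3: "word_prod \<alpha> [(1, int n1), (2, int n2), (1, int n3)] =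
   Em (real n1 * (pi*\<alpha>)) (real n2 * (pi*\<alpha>)) (real n3 * (pi*\<alpha>))"
  by (simp add: word_prod_def mzpow_def gate_Gs Gs_def mpow_Dm mpow_Rm DRD[symmetric] matrix_mul_assoc)

lemma cis_dist: "cmod (cis x - cis y) \<le> \<bar>x - y\<bar>"
proof -
  have e: "cis x - cis y = cis y * (cis (x - y) - 1)"
    by (simp add: algebra_simps cis_mult)
  have "(cmod (cis (x-y) - 1))^2 = (cos (x-y) - 1)^2 + (sin (x-y))^2"
    by (simp add: cmod_power2)
  also have "\<dots> = 2 - 2 * cos (x-y)"
    using sin_cos_squared_add[of "x-y"] by (simp add: power2_eq_square algebra_simps)
  also have "\<dots> = 4 * (sin ((x-y)/2))^2"
  proof -
    have h: "2 * ((x - y) / 2) = x - y" by simp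
    have "cos (x-y) = 1 - 2*(sin((x-y)/2))^2" using cos_double_sin[of "(x-y)/2"] unfolding h .
    then show ?thesis by simp
  qed
  also have "\<dots> \<le> 4 * ((x-y)/2)^2"
    using abs_sin_x_le_abs_x[of "(x-y)/2"] abs_le_square_iff[of "sin ((x-y)/2)" "(x-y)/2"]
    by linarith
  also have "\<dots> = (x - y)^2" by (simp add: power2_eq_square field_simps)
  finally have "(cmod (cis (x-y) - 1))^2 \<le> \<bar>x - y\<bar>^2" by simp
  then have "cmod (cis (x-y) - 1) \<le> \<bar>x - y\<bar>"
    by (rule power2_le_imp_le) simp
  then show ?thesis unfolding e by (simp add: norm_mult)
qed

lemma cos_dist_cis: "\<bar>cos x - cos y\<bar> \<le> cmod (cis x - cis y)"
  using abs_Re_le_cmod[of "cis x - cis y"] by simp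

lemma cis_neg_dist: "cmod (cis (-x) - cis (-y)) = cmod (cis x - cis y)"
proof -
  have "cis (-x) - cis (-y) = cnj (cis x - cis y)" by (simp add: cis_cnj)
  then show ?thesis by (metis complex_mod_cnj)
qed

lemma prod3_dist:
  fixes x y x' y' :: complex and r r' :: real
  assumes "cmod x' \<le> 1" "cmod y \<le> 1" "cmod y' \<le> 1" "\<bar>r\<bar> \<le> 1"
  shows "cmod (x*y*r - x'*y'*r') \<le> cmod (x - x') * (cmod y) + cmod (y - y') + \<bar>r - r'\<bar>"
proof -
  have e: "x*y*r - x'*y'*r' = (x-x')*y*r + x'*(y-y')*r + x'*y'*(r - r')" by (simp add: algebra_simps)
  have "cmod ((x-x')*y*r) \<le> cmod (x-x') * cmod y"
    using assms by (simp add: norm_mult mult_left_le mult_le_one)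
  moreover have "cmod (x'*(y-y')*r) \<le> cmod (y - y')"
    using assms by (simp add: norm_mult) (metis mult.assoc mult_le_one norm_ge_zero abs_ge_zero mult_left_le mult.commute mult_mono' zero_le_one)
  moreover have "cmod (x'*y'*complex_of_real (r - r')) \<le> \<bar>r - r'\<bar>"
  proof -
    have "cmod x' * cmod y' \<le> 1" using assms by (simp add: mult_le_one)
    then have "cmod x' * cmod y' * \<bar>r - r'\<bar> \<le> \<bar>r - r'\<bar>"
      by (simp add: mult_left_le_one_le)
    then show ?thesis by (simp add: norm_mult flip: of_real_diff)
  qed
  ultimately show ?thesis unfolding e
    by (smt (verit) norm_triangle_ineq of_real_diff)
qed

lemma Em_alt: "Em a b c = mk (cis a * cis c * cos b) (cis a * cis (-c) * sin b)
    (- (cis (-a) * cis c * sin b)) (cis (-a) * cis (-c) * cos b)"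
  by (simp add: Em_def cis_mult)

lemma sin_dist_cis: "\<bar>sin x - sin y\<bar> \<le> cmod (cis x - cis y)"
  using abs_Im_le_cmod[of "cis x - cis y"] by simp

lemma Em_approx:
  assumes "cmod (cis a - cis a') < \<eta>" "cmod (cis b - cis b') < \<eta>" "cmod (cis c - cis c') < \<eta>"
  shows "hs_norm (Em a' b' c' - Em a b c) < 6 * \<eta>"
proof -
  have A: "cmod (cis a' - cis a) < \<eta>" "cmod (cis (-a') - cis (-a)) < \<eta>"
    using assms(1) cis_neg_dist[of a' a] by (simp_all add: norm_minus_commute)
  have C: "cmod (cis c' - cis c) < \<eta>" "cmod (cis (-c') - cis (-c)) < \<eta>"
    using assms(3) cis_neg_dist[of c' c] by (simp_all add: norm_minus_commute)
  have B: "\<bar>cos b' - cos b\<bar> < \<eta>" "\<bar>sin b' - sin b\<bar> < \<eta>"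
    using assms(2) cos_dist_cis[of b' b] sin_dist_cis[of b' b] by (simp_all add: norm_minus_commute)
  have cb: "\<bar>cos b'\<bar> \<le> 1" "\<bar>sin b'\<bar> \<le> 1" by simp_all
  have g: "cmod (x*y*r - x'*y'*r') < 3 * \<eta>"
    if "cmod (x - x') < \<eta>" "cmod (y - y') < \<eta>" "\<bar>r - r'\<bar> < \<eta>" "cmod x' = 1" "cmod y = 1" "cmod y' = 1" "\<bar>r\<bar> \<le> 1"
    for x y x' y' :: complex and r r' :: real
    using prod3_dist[of x' y y' r x r'] that by simp
  have e1: "cmod (cis a' * cis c' * cos b' - cis a * cis c * cos b) < 3 * \<eta>"
    using A B C by (intro g) auto
  have e2: "cmod (cis a' * cis (-c') * sin b' - cis a * cis (-c) * sin b) < 3 * \<eta>"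
    using A B C by (intro g) auto
  have e3: "cmod (- (cis (-a') * cis c' * sin b') - - (cis (-a) * cis c * sin b)) < 3 * \<eta>"
    using g[of "cis (-a')" "cis (-a)" "cis c'" "cis c" "sin b'" "sin b"] A B C
    by (simp add: norm_minus_commute)
  have e4: "cmod (cis (-a') * cis (-c') * cos b' - cis (-a) * cis (-c) * cos b) < 3 * \<eta>"
    using A B C by (intro g) auto
  show ?thesis unfolding Em_alt mk_diff
    using hs_norm_bound[OF e1 e2 e3 e4] by simp
qed

lemma Em_SU2: "Em a b c \<in> SU2"
proof -
  have cs: "complex_of_real (cos b) * complex_of_real (cos b) + complex_of_real (sin b) * complex_of_real (sin b) = 1"
    by (simp flip: of_real_mult of_real_add)
  have u: "cnj (cis x) * cis x = 1" for x by (simp add: cis_cnj cis_mult)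
  show ?thesis unfolding SU2_def Em_alt
    apply (simp add: mat1_mk cis_cnj)
    apply (intro conjI)
    by (simp_all add: algebra_simps cis_mult cs)
qed

lemma SU2_form:
  assumes "U \<in> SU2"
  shows "\<exists>a b. U = mk a b (- cnj b) (cnj a) \<and> (cmod a)^2 + (cmod b)^2 = 1"
proof -
  define a b c d where "a = U$1$1" "b = U$1$2" "c = U$2$1" "d = U$2$2"
  have U: "U = mk a b c d" unfolding a_b_c_d_def by (rule mk_entries)
  have un: "adj U ** U = mat 1" and dt: "a*d - b*c = 1" using assms unfolding SU2_def U by auto
  define V where "V = mk d (-b) (-c) a"
  have UV: "U ** V = mat 1" using dt unfolding U V_def mat1_mk by (simp add: algebra_simps)
  have "adj U = adj U ** (U ** V)" using UV by simp
  also have "\<dots> = V" by (simp add: matrix_mul_assoc un)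
  finally have "mk (cnj a) (cnj c) (cnj b) (cnj d) = mk d (-b) (-c) a" unfolding U V_def by simp
  then have d: "d = cnj a" and c: "c = - cnj b" by (auto simp: complex_cnj_cancel_iff)
  have "cnj a * a + cnj c * c = 1" using un unfolding U mat1_mk by simp
  then have "Re (cnj a * a) + Re (cnj c * c) = 1" by (metis one_complex.simps(1) plus_complex.simps(1))
  then have "(cmod a)^2 + (cmod c)^2 = 1" by (simp only: cmod_sq_cnj)
  then show ?thesis using U c d by (intro exI[of _ a] exI[of _ b]) auto
qed

lemma euler:
  assumes "(cmod a)^2 + (cmod b)^2 = 1"
  shows "\<exists>p1 s p2. 0 \<le> s \<and> s \<le> pi/2 \<and> mk a b (- cnj b) (cnj a) = Em p1 s p2"
proof -
  have a1: "cmod a \<le> 1" using assms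
    by (smt (verit) norm_ge_zero power2_le_imp_le zero_le_power2 one_power2)
  have a0: "-1 \<le> cmod a" using norm_ge_zero[of a] by linarith
  define s where "s = arccos (cmod a)"
  have cs: "cos s = cmod a" unfolding s_def using a1 norm_ge_zero[of a] by (intro cos_arccos) linarith+
  have ss: "sin s = cmod b" unfolding s_def using a1 sin_arccos[of "cmod a"] assms norm_ge_zero[of a]
    by (simp add: real_sqrt_unique)
  have s0: "0 \<le> s" "s \<le> pi/2" unfolding s_def using a1 a0 arccos_lbound[of "cmod a"] arccos_le_pi2[of "cmod a"] by auto
  define p1 where "p1 = (Arg a + Arg b)/2"
  define p2 where "p2 = (Arg a - Arg b)/2"
  have ea: "a = cis (Arg a) * cmod a" using rcis_cmod_Arg[of a] by (simp add: rcis_def mult.commute)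
  have eb: "b = cis (Arg b) * cmod b" using rcis_cmod_Arg[of b] by (simp add: rcis_def mult.commute)
  have "Em p1 s p2 = mk (cis (Arg a) * cmod a) (cis (Arg b) * cmod b) (- (cis (- Arg b) * cmod b)) (cis (- Arg a) * cmod a)"
    unfolding Em_def p1_def p2_def cs ss by (simp add: field_simps)
  also have "\<dots> = mk a b (- cnj b) (cnj a)"
    using ea eb by (metis cis_cnj complex_cnj_complex_of_real complex_cnj_mult)
  finally show ?thesis using s0 by metis
qed

fun bb :: "int \<Rightarrow> int \<Rightarrow> nat \<Rightarrow> int" where
  "bb m k 0 = 2"
| "bb m k (Suc 0) = m"
| "bb m k (Suc (Suc n)) = m * bb m k (Suc n) - k^2 * bb m k n"

lemma cos_rec: "cos (real (Suc (Suc n)) * y) = 2 * cos y * cos (real (Suc n) * y) - cos (real n * y)"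
proof -
  have "cos (real (Suc n) * y + y) + cos (real (Suc n) * y - y) = 2 * cos y * cos (real (Suc n) * y)"
    by (simp add: cos_add cos_diff)
  moreover have "real (Suc (Suc n)) * y = real (Suc n) * y + y" "real n * y = real (Suc n) * y - y"
    by (simp_all add: algebra_simps)
  ultimately show ?thesis by simp
qed

lemma bb_real:
  assumes "real_of_int m = real_of_int k * (2 * cos y)"
  shows "real_of_int (bb m k n) = real_of_int k ^ n * (2 * cos (real n * y))"
proof -
  have "real_of_int (bb m k n) = real_of_int k ^ n * (2 * cos (real n * y)) \<and>
        real_of_int (bb m k (Suc n)) = real_of_int k ^ (Suc n) * (2 * cos (real (Suc n) * y))"
  proof (induction n)
    case 0 then show ?case using assms by simp
  next
    case (Suc n)
    then have "real_of_int (bb m k (Suc (Suc n))) =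
       real_of_int m * (real_of_int k ^ (Suc n) * (2 * cos (real (Suc n) * y))) - (real_of_int k)^2 * (real_of_int k ^ n * (2 * cos (real n * y)))"
      by simp
    also have "\<dots> = real_of_int k ^ (Suc (Suc n)) * (2 * cos (real (Suc (Suc n)) * y))"
      unfolding cos_rec assms by (simp add: algebra_simps power2_eq_square)
    finally show ?case using Suc by simp
  qed
  then show ?thesis by simp
qed

lemma bb_mod:
  "n \<ge> 1 \<Longrightarrow> k dvd (bb m k n - m ^ n)"
proof -
  have "k dvd (bb m k (Suc n) - m ^ (Suc n)) \<and> k dvd (bb m k (Suc (Suc n)) - m ^ (Suc (Suc n)))" for n
  proof (induction n)
    case 0
    have "bb m k 2 - m^2 = k * (- k * 2)" by (simp add: numeral_2_eq_2 power2_eq_square)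
    then show ?case by (simp add: numeral_2_eq_2[symmetric])
  next
    case (Suc n)
    then obtain j where j: "bb m k (Suc (Suc n)) - m ^ (Suc (Suc n)) = k * j" by (meson dvdE)
    have "bb m k (Suc (Suc (Suc n))) - m ^ (Suc (Suc (Suc n))) =
      m * (bb m k (Suc (Suc n)) - m ^ (Suc (Suc n))) - k^2 * bb m k (Suc n)" by (simp add: algebra_simps)
    also have "\<dots> = k * (m * j - k * bb m k (Suc n))" unfolding j by (simp add: algebra_simps power2_eq_square)
    finally show ?case using Suc by simp
  qed
  then show "n \<ge> 1 \<Longrightarrow> k dvd (bb m k n - m ^ n)" by (cases n) auto
qed

lemma niven_int:
  assumes "2 * cos y \<in> \<rat>" "N \<ge> 1" "cos (real N * y) = 1"
  shows "2 * cos y \<in> \<int>"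
proof -
  obtain m k where k: "k > 0" "coprime m k" "2 * cos y = of_int m / of_int k"
    using Rats_cases'[OF assms(1)] by metis
  have mk: "real_of_int m = real_of_int k * (2 * cos y)" using k by simp
  have "real_of_int (bb m k N) = real_of_int k ^ N * 2"
    using bb_real[OF mk, of N] assms(3) by simp
  then have "bb m k N = k ^ N * 2" by (metis of_int_eq_iff of_int_mult of_int_numeral of_int_power)
  then have "k dvd bb m k N" using assms(2) by (simp add: dvd_power)
  then have "k dvd (bb m k N - (bb m k N - m ^ N))" using bb_mod[OF assms(2), of k m] by (rule dvd_diff)
  then have "k dvd m ^ N" by simp
  moreover have "coprime k (m ^ N)" using k(2) by (simp add: coprime_commute)
  ultimately have "is_unit k" by (metis coprime_absorb_left)
  then have "k = 1" using k(1) by simp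
  then show ?thesis using k(3) by simp
qed

lemma alpha_irrational:
  assumes "cos (pi * \<alpha>) \<in> \<rat>" "cos (pi * \<alpha>) \<notin> {0, 1, -1, 1/2, -1/2}"
  shows "\<alpha> \<notin> \<rat>"
proof
  assume "\<alpha> \<in> \<rat>"
  then obtain a b where b: "b > 0" "\<alpha> = of_int a / of_int b" using Rats_cases' by metis
  define N where "N = nat (2 * b)"
  have N1: "N \<ge> 1" using b by (simp add: N_def)
  have "real N * (pi * \<alpha>) = 2 * pi * of_int a" using b by (simp add: N_def)
  then have "cos (real N * (pi * \<alpha>)) = 1" by (metis cos_int_2pin)
  moreover have "2 * cos (pi * \<alpha>) \<in> \<rat>" using assms(1) by simp
  ultimately have "2 * cos (pi * \<alpha>) \<in> \<int>" using niven_int N1 by blast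
  then obtain z where z: "2 * cos (pi * \<alpha>) = of_int z" by (metis Ints_cases)
  have "\<bar>2 * cos (pi*\<alpha>)\<bar> \<le> 2" using abs_cos_le_one[of "pi*\<alpha>"] by (simp add: abs_mult)
  then have "\<bar>of_int z :: real\<bar> \<le> 2" using z by simp
  then have "z \<in> {-2, -1, 0, 1, 2}" by auto
  then show False using z assms(2) by auto
qed

lemma density_cis:
  assumes "\<alpha> \<notin> \<rat>" "\<eta> > 0"
  shows "\<exists>n::nat. cmod (cis (real n * (pi * \<alpha>)) - cis \<phi>) < \<eta>"
proof -
  have irr: "\<alpha> / 2 \<notin> \<rat>"
  proof
    assume h: "\<alpha> / 2 \<in> \<rat>"
    have "2 * (\<alpha> / 2) \<in> \<rat>" by (rule Rats_mult) (use h in auto)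
    moreover have "2 * (\<alpha> / 2) = \<alpha>" by simp
    ultimately show False using assms(1) by metis
  qed
  have e: "\<eta> / (2*pi) > 0" using assms(2) by simp
  obtain h k where hk: "k > 0" "\<bar>of_int k * (\<alpha>/2) - of_int h - \<phi>/(2*pi)\<bar> < \<eta>/(2*pi)"
    using sequence_of_fractional_parts_is_dense[OF irr e] by metis
  define d where "d = of_int k * (\<alpha>/2) - of_int h - \<phi>/(2*pi)"
  have de: "of_int k * (pi * \<alpha>) - 2*pi* of_int h - \<phi> = (2*pi) * d"
    unfolding d_def by (simp add: field_simps)
  have "\<bar>(2*pi) * d\<bar> = (2*pi) * \<bar>d\<bar>" by (simp add: abs_mult)
  also have "\<dots> < (2*pi) * (\<eta>/(2*pi))" using hk(2) unfolding d_def by (intro mult_strict_left_mono) auto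
  also have "\<dots> = \<eta>" by simp
  finally have lt: "\<bar>of_int k * (pi * \<alpha>) - 2*pi* of_int h - \<phi>\<bar> < \<eta>" unfolding de .
  define n where "n = nat k"
  have rn: "real n = of_int k" using hk(1) by (simp add: n_def)
  have "cis (real n * (pi * \<alpha>)) = cis (of_int k * (pi * \<alpha>) - 2*pi* of_int h)"
  proof -
    have c1: "cis (2*pi * of_int h) = 1" by (simp add: complex_eq_iff)
    have "cis (of_int k * (pi * \<alpha>) - 2*pi * of_int h) = cis (of_int k * (pi * \<alpha>)) / cis (2*pi * of_int h)"
      by (simp only: cis_divide)
    then show ?thesis using c1 rn by simp
  qed
  then have "cmod (cis (real n * (pi * \<alpha>)) - cis \<phi>) < \<eta>"
    using cis_dist[of "of_int k * (pi * \<alpha>) - 2*pi* of_int h" \<phi>] lt by simp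
  then show ?thesis by blast
qed

lemma rat_sq_int:
  fixes r :: real
  assumes "r \<in> \<rat>" "r^2 \<in> \<int>"
  shows "r \<in> \<int>"
proof -
  obtain m n where mn: "n > 0" "coprime m n" "r = of_int m / of_int n"
    using Rats_cases'[OF assms(1)] by metis
  obtain R where R: "r^2 = of_int R" using assms(2) by (metis Ints_cases)
  have "(of_int m :: real)^2 = of_int R * (of_int n)^2"
    using R mn by (simp add: field_simps power2_eq_square)
  then have "m^2 = R * n^2" by (metis of_int_eq_iff of_int_mult of_int_power)
  then have "n dvd m^2" by (metis dvd_triv_right power2_eq_square dvd_mult_left)
  moreover have "coprime n (m^2)" using mn(2) by (simp add: coprime_commute)
  ultimately have "is_unit n" by (metis coprime_absorb_left)
  then have "n = 1" using mn(1) by simp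
  then show ?thesis using mn by simp
qed

lemma int_eq_div_dvd:
  fixes A u :: int and v K :: nat
  assumes "real_of_int A = of_int u * real K / real v" "v \<ge> 1"
  shows "int v dvd u * int K"
proof -
  have "real_of_int A * real v = of_int u * real K" using assms by (simp add: field_simps)
  then have "A * int v = u * int K" by (metis of_int_eq_iff of_int_mult of_int_of_nat_eq)
  then show ?thesis by (metis dvd_triv_right)
qed

lemma key_ineq:
  fixes a b c d R u :: int and r :: real and v K :: nat
  assumes r2: "r^2 = of_int R" and R1: "R \<ge> 1" and v1: "v \<ge> 1" and K1: "K \<ge> 1"
    and nd: "\<not> (int v dvd u * int K)"
    and t0: "0 \<le> of_int u / real v" and t1: "of_int u / real v \<le> 1"
    and Xp: "(of_int a - r * of_int c)^2 + (of_int b - r * of_int d)^2 \<le> real K"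
  shows "\<bar>(of_int a + r * of_int c)^2 + (of_int b + r * of_int d)^2 - (of_int u / real v) * real K\<bar>
           \<ge> 1 / ((real v)^2 * real K)"
proof -
  define A where "A = a^2 + b^2 + R * (c^2 + d^2)"
  define B where "B = 2 * (a*c + b*d)"
  define X where "X = (of_int a + r * of_int c)^2 + (of_int b + r * of_int d)^2"
  define X' where "X' = (of_int a - r * of_int c)^2 + (of_int b - r * of_int d)^2"
  define T where "T = of_int u * real K / real v"
  have TT: "(of_int u / real v) * real K = T" unfolding T_def by simp
  have XA: "X = of_int A + r * of_int B"
    unfolding X_def A_def B_def by (simp add: power2_eq_square algebra_simps r2[symmetric])
  have XA': "X' = of_int A - r * of_int B"
    unfolding X'_def A_def B_def by (simp add: power2_eq_square algebra_simps r2[symmetric])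
  define N where "N = (int v * A - u * int K)^2 - R * (int v)^2 * B^2"
  have vpos: "real v > 0" using v1 by simp
  have Kpos: "real K > 0" using K1 by simp
  have NX: "real_of_int N = (real v)^2 * ((X - T) * (X' - T))"
    unfolding N_def XA XA' T_def using vpos
    by (simp add: power2_eq_square algebra_simps r2[symmetric]) (simp add: field_simps)
  have X'0: "0 \<le> X'" unfolding X'_def by simp
  have X'K: "X' \<le> real K" using Xp unfolding X'_def .
  have T0: "0 \<le> T" using mult_nonneg_nonneg[OF t0, of "real K"] unfolding TT by simp
  have TK: "T \<le> real K" using mult_right_mono[OF t1, of "real K"] unfolding TT by simp
  have bnd: "\<bar>X' - T\<bar> \<le> real K" using X'0 X'K T0 TK by linarith
  have goal_small: "1 / ((real v)^2 * real K) \<le> 1"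
  proof -
    have "(real v)^2 \<ge> 1" using v1 by simp
    moreover have "real K \<ge> 1" using K1 by simp
    ultimately have "(real v)^2 * real K \<ge> 1" by (metis mult_mono' mult_1_left zero_le_one order_trans)
    then show ?thesis by simp
  qed
  have XT: "X \<noteq> T"
  proof
    assume XT: "X = T"
    show False
    proof (cases "B = 0")
      case True
      then have "real_of_int A = of_int u * real K / real v" using XT XA T_def by simp
      then show False using int_eq_div_dvd[OF _ v1] nd by blast
    next
      case False
      have "r = (T - of_int A) / of_int B" using XT XA False by (simp add: field_simps)
      then have "r \<in> \<rat>" unfolding T_def by simp
      moreover have "r^2 \<in> \<int>" using r2 by simp
      ultimately have "r \<in> \<int>" by (rule rat_sq_int)
      then obtain z where z: "r = of_int z" by (metis Ints_cases)
      have "real_of_int (A + z * B) = of_int u * real K / real v" using XT XA z T_def by simp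
      then show False using int_eq_div_dvd[OF _ v1] nd by blast
    qed
  qed
  show ?thesis
  proof (cases "N = 0")
    case False
    then have "\<bar>real_of_int N\<bar> \<ge> 1" by linarith
    then have "1 \<le> (real v)^2 * (\<bar>X - T\<bar> * \<bar>X' - T\<bar>)" unfolding NX by (simp add: abs_mult)
    also have "\<dots> \<le> (real v)^2 * (\<bar>X - T\<bar> * real K)"
      by (intro mult_left_mono bnd) auto
    finally have "1 \<le> ((real v)^2 * real K) * \<bar>X - T\<bar>" by (simp add: algebra_simps)
    then have "1 / ((real v)^2 * real K) \<le> \<bar>X - T\<bar>" using vpos Kpos by (simp add: field_simps)
    then show ?thesis unfolding X_def[symmetric] TT .
  next
    case True
    then have "(X - T) * (X' - T) = 0" using NX vpos by simp
    then have X'T: "X' = T" using XT by simp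
    have "B \<noteq> 0" using XT X'T XA XA' by auto
    then have B1: "\<bar>real_of_int B\<bar> \<ge> 1" by linarith
    have r1: "\<bar>r\<bar> \<ge> 1"
    proof -
      have "\<bar>r\<bar>^2 \<ge> 1" using r2 R1 by simp
      then show ?thesis by (metis abs_ge_zero one_le_power power2_le_imp_le one_power2 linorder_le_cases)
    qed
    have "X - T = 2 * r * of_int B" using X'T XA XA' by simp
    then have "\<bar>X - T\<bar> = 2 * (\<bar>r\<bar> * \<bar>real_of_int B\<bar>)" by (simp add: abs_mult)
    also have "\<dots> \<ge> 2 * (1 * 1)" using r1 B1 by (intro mult_left_mono mult_mono) auto
    finally have "\<bar>X - T\<bar> \<ge> 1 / ((real v)^2 * real K)" using goal_small by linarith
    then show ?thesis unfolding X_def[symmetric] TT .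
  qed
qed

definition gi :: "complex \<Rightarrow> bool" where "gi z \<longleftrightarrow> Re z \<in> \<int> \<and> Im z \<in> \<int>"
definition gim :: "cmat2 \<Rightarrow> bool" where "gim P \<longleftrightarrow> gi (P$1$1) \<and> gi (P$1$2) \<and> gi (P$2$1) \<and> gi (P$2$2)"

lemma gi_add: "gi x \<Longrightarrow> gi y \<Longrightarrow> gi (x + y)" by (simp add: gi_def)
lemma gi_diff: "gi x \<Longrightarrow> gi y \<Longrightarrow> gi (x - y)" by (simp add: gi_def)
lemma gi_mult: "gi x \<Longrightarrow> gi y \<Longrightarrow> gi (x * y)" by (simp add: gi_def)
lemma gi_scale: "gi x \<Longrightarrow> gi (of_int k *\<^sub>R x)" by (simp add: gi_def)
lemma gi_0: "gi 0" and gi_1: "gi 1" and gi_i: "gi \<i>" and gi_int: "gi (of_int k)" by (simp_all add: gi_def)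

lemma gim_zero: "gim 0" by (simp add: gim_def gi_def)

lemma gim_mk: "gim (mk a b c d) \<longleftrightarrow> gi a \<and> gi b \<and> gi c \<and> gi d" by (simp add: gim_def)

lemma gim_add: "gim P \<Longrightarrow> gim Q \<Longrightarrow> gim (P + Q)"
  by (subst (asm) (1 2) mk_entries, subst (1 2) mk_entries) (simp add: gim_mk gi_add)
lemma gim_diff: "gim P \<Longrightarrow> gim Q \<Longrightarrow> gim (P - Q)"
  by (subst (asm) (1 2) mk_entries, subst (1 2) mk_entries) (simp add: gim_mk gi_diff)
lemma gim_mult: "gim P \<Longrightarrow> gim Q \<Longrightarrow> gim (P ** Q)"
  by (subst (asm) (1 2) mk_entries, subst (1 2) mk_entries) (simp add: gim_mk gi_add gi_mult)
lemma gim_scale: "gim P \<Longrightarrow> gim (of_int k *\<^sub>R P)"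
  by (subst (asm) mk_entries, subst mk_entries) (simp add: gim_mk gi_scale)

lemma scaleR_mmult: "(a *\<^sub>R (X::cmat2)) ** (b *\<^sub>R (Y::cmat2)) = (a*b) *\<^sub>R (X ** Y)"
  apply (subst mat_eq_iff2)
  by (simp add: matrix_matrix_mult_def sum_2) (simp add: scaleR_conv_of_real algebra_simps)

lemma expand_mult: "((P1::cmat2) + r *\<^sub>R (Q1::cmat2)) ** ((P2::cmat2) + r *\<^sub>R (Q2::cmat2)) =
   (P1 ** P2 + (r*r) *\<^sub>R (Q1 ** Q2)) + r *\<^sub>R (P1 ** Q2 + Q1 ** P2)"
  apply (subst mat_eq_iff2)
  by (simp add: matrix_matrix_mult_def sum_2) (simp add: scaleR_conv_of_real algebra_simps)

lemma expand_mult': "((P1::cmat2) - r *\<^sub>R (Q1::cmat2)) ** ((P2::cmat2) - r *\<^sub>R (Q2::cmat2)) =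
   (P1 ** P2 + (r*r) *\<^sub>R (Q1 ** Q2)) - r *\<^sub>R (P1 ** Q2 + Q1 ** P2)"
  apply (subst mat_eq_iff2)
  by (simp add: matrix_matrix_mult_def sum_2) (simp add: scaleR_conv_of_real algebra_simps)

definition Phi :: "real \<Rightarrow> real \<Rightarrow> nat \<Rightarrow> (real \<Rightarrow> cmat2) \<Rightarrow> bool" where
  "Phi q r n F \<longleftrightarrow> (\<exists>P Q. gim P \<and> gim Q \<and> F 1 = (1 / q^n) *\<^sub>R (P + r *\<^sub>R Q) \<and> F (-1) = (1 / q^n) *\<^sub>R (P - r *\<^sub>R Q))"

lemma Phi_mult:
  assumes "Phi q r m F" "Phi q r n H" "r * r = of_int R"
  shows "Phi q r (m + n) (\<lambda>s. F s ** H s)"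
proof -
  obtain P1 Q1 where 1: "gim P1" "gim Q1" "F 1 = (1 / q^m) *\<^sub>R (P1 + r *\<^sub>R Q1)" "F (-1) = (1 / q^m) *\<^sub>R (P1 - r *\<^sub>R Q1)"
    using assms(1) unfolding Phi_def by blast
  obtain P2 Q2 where 2: "gim P2" "gim Q2" "H 1 = (1 / q^n) *\<^sub>R (P2 + r *\<^sub>R Q2)" "H (-1) = (1 / q^n) *\<^sub>R (P2 - r *\<^sub>R Q2)"
    using assms(2) unfolding Phi_def by blast
  have qq: "(1 / q^m) * (1 / q^n) = 1 / q^(m+n)" by (simp add: power_add)
  show ?thesis unfolding Phi_def
    apply (rule exI[of _ "P1 ** P2 + of_int R *\<^sub>R (Q1 ** Q2)"])
    apply (rule exI[of _ "P1 ** Q2 + Q1 ** P2"])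
    using 1 2 assms(3)
    by (simp add: gim_add gim_mult gim_scale scaleR_mmult expand_mult expand_mult' qq power_add)
qed

lemma Phi_one: "Phi q r 0 (\<lambda>s. mat 1)"
  unfolding Phi_def
  by (rule exI[of _ "mat 1"], rule exI[of _ 0]) (simp add: mat1_mk gim_mk gi_0 gi_1 gim_zero)

lemma Phi_mpow:
  assumes "Phi q r 1 F" "r * r = of_int R"
  shows "Phi q r k (\<lambda>s. mpow (F s) k)"
proof (induction k)
  case 0 then show ?case using Phi_one by simp
next
  case (Suc k)
  have "Phi q r (1 + k) (\<lambda>s. F s ** mpow (F s) k)" by (rule Phi_mult[OF assms(1) Suc assms(2)])
  then show ?case by simp
qed

definition Mi :: "nat \<Rightarrow> cmat2" where
  "Mi i = (if i = 1 then mk \<i> 0 0 (-\<i>) else mk 0 1 (-1) 0)"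

lemma cis_pm: "(\<rho>::real) \<in> {1, -1} \<Longrightarrow> cis (\<rho> * t) = complex_of_real (cos t) + \<i> * complex_of_real (\<rho> * sin t)"
  by (auto simp: complex_eq_iff)
lemma cos_pm: "(\<rho>::real) \<in> {1, -1} \<Longrightarrow> cos (\<rho> * t) = cos t" by auto
lemma sin_pm: "(\<rho>::real) \<in> {1, -1} \<Longrightarrow> sin (\<rho> * t) = \<rho> * sin t" by auto

lemma Gs_form:
  assumes "\<rho> \<in> {1, -1}" "cos t = p / q" "q \<noteq> 0" "r = q * sin t"
  shows "Gs t i \<rho> = (1 / q) *\<^sub>R (of_real p *\<^sub>R mat 1 + (\<rho> * r) *\<^sub>R Mi i)"
proof -
  have c: "cos t = p / q" and s: "sin t = r / q" using assms by auto
  have m: "\<rho> \<in> {1, -1} \<Longrightarrow> - \<rho> \<in> {1, -1}" by auto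
  show ?thesis
  proof (cases "i = 1")
    case True
    show ?thesis using assms(1) assms(3) True
      by (auto simp: Gs_def Dm_def Mi_def mat1_mk complex_eq_iff c s field_simps)
  next
    case False
    show ?thesis using assms(1) assms(3) False
      by (auto simp: Gs_def Rm_def Mi_def mat1_mk complex_eq_iff c s field_simps)
  qed
qed

lemma Phi_Gs:
  assumes "cos t = of_int p / q" "q \<noteq> 0" "r = q * sin t" "\<tau> \<in> {1, -1}"
  shows "Phi q r 1 (\<lambda>s. Gs t i (\<tau> * s))"
proof -
  have gM: "gim (Mi i)" by (simp add: Mi_def gim_mk gi_0 gi_1 gi_i gi_diff[of 0, simplified] gi_def)
  have gP: "gim (of_real (of_int p) *\<^sub>R mat 1)" by (simp add: mat1_mk gim_mk gi_def)
  have t1: "\<tau> * 1 \<in> {1, -1}" "\<tau> * -1 \<in> {1, -1}" using assms(4) by auto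
  show ?thesis unfolding Phi_def
    apply (rule exI[of _ "of_real (of_int p) *\<^sub>R mat 1"])
    apply (rule exI[of _ "\<tau> *\<^sub>R Mi i"])
    using gM gP assms Gs_form[OF t1(1) assms(1) assms(2) assms(3), of i] Gs_form[OF t1(2) assms(1) assms(2) assms(3), of i]
    by (auto simp: gim_scale[of _ 1, simplified] gim_scale[of _ "-1", simplified] algebra_simps)
qed

lemma Phi_wp:
  assumes "cos t = of_int p / q" "q \<noteq> 0" "r = q * sin t" "r * r = of_int R"
  shows "Phi q r (word_cost ws) (\<lambda>s. wp t s ws)"
proof (induction ws)
  case Nil then show ?case using Phi_one by (simp add: wp_def word_cost_def)
next
  case (Cons x ws)
  obtain i n where x: "x = (i, n)" by fastforce
  define \<tau> :: real where "\<tau> = (if 0 \<le> n then 1 else -1)"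
  have tau: "\<tau> \<in> {1, -1}" by (simp add: \<tau>_def)
  have e: "(if 0 \<le> n then s else - s) = \<tau> * s" for s by (simp add: \<tau>_def)
  have "Phi q r (nat \<bar>n\<bar>) (\<lambda>s. mpow (Gs t i (\<tau> * s)) (nat \<bar>n\<bar>))"
    by (rule Phi_mpow[OF Phi_Gs[OF assms(1-3) tau] assms(4)])
  then have "Phi q r (nat \<bar>n\<bar> + word_cost ws) (\<lambda>s. mpow (Gs t i (\<tau> * s)) (nat \<bar>n\<bar>) ** wp t s ws)"
    by (rule Phi_mult[OF _ Cons assms(4)])
  then show ?case by (simp add: x wp_def word_cost_def e)
qed

definition unitary :: "cmat2 \<Rightarrow> bool" where "unitary U \<longleftrightarrow> adj U ** U = mat 1"

lemma adj_mult: "adj (A ** B) = adj B ** adj A"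
  by (simp add: mat_eq_iff2 adj_def transpose_def matrix_matrix_mult_def sum_2 mult.commute)

lemma unitary_mult: "unitary A \<Longrightarrow> unitary B \<Longrightarrow> unitary (A ** B)"
  unfolding unitary_def adj_mult
  by (metis matrix_mul_assoc matrix_mul_lid)

lemma unitary_one: "unitary (mat 1)" by (simp add: unitary_def mat1_mk)

lemma unitary_Gs: "unitary (Gs t i s)"
proof -
  have cs: "complex_of_real (cos b) * complex_of_real (cos b) + complex_of_real (sin b) * complex_of_real (sin b) = 1" for b
    by (simp flip: of_real_mult of_real_add)
  show ?thesis
    by (simp add: unitary_def Gs_def Dm_def Rm_def mat1_mk cis_cnj cis_mult algebra_simps cs)
qed

lemma unitary_mpow: "unitary A \<Longrightarrow> unitary (mpow A k)"
  by (induction k) (simp_all add: unitary_one unitary_mult)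

lemma unitary_wp: "unitary (wp t s ws)"
  by (induction ws) (auto simp: wp_def unitary_one unitary_mult unitary_mpow unitary_Gs)

lemma unitary_entry: "unitary U \<Longrightarrow> cmod (U$1$1) \<le> 1"
proof -
  assume u: "unitary U"
  have "adj U ** U = mat 1" using u by (simp add: unitary_def)
  then have "cnj (U$1$1) * U$1$1 + cnj (U$2$1) * U$2$1 = 1"
    by (subst (asm) (1 2) mk_entries) (simp add: mat1_mk)
  then have "Re (cnj (U$1$1) * U$1$1) + Re (cnj (U$2$1) * U$2$1) = 1"
    by (metis one_complex.simps(1) plus_complex.simps(1))
  then have "(cmod (U$1$1))^2 + (cmod (U$2$1))^2 = 1" by (simp only: cmod_sq_cnj)
  then have "(cmod (U$1$1))^2 \<le> 1" by (smt (verit) zero_le_power2)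
  then show ?thesis by (simp add: power_le_one_iff abs_square_le_1)
qed

lemma special_rat:
  fixes m :: nat and a b :: real
  assumes m2: "m \<ge> 2" and ab: "a < b"
  shows "\<exists>j u. j \<ge> 1 \<and> u mod int m = 1 \<and> a < of_int u / real m ^ j \<and> of_int u / real m ^ j < b"
proof -
  have m1: "real m > 1" using m2 by simp
  obtain j0 where j0: "(real m + 1) / (b - a) < real m ^ j0" using real_arch_pow[OF m1] by blast
  define j where "j = Suc j0"
  define M where "M = real m ^ j"
  have Mge: "real m ^ j0 \<le> M" unfolding M_def j_def using m1 by simp
  have Mpos: "M > 0" unfolding M_def using m1 by simp
  have bigM: "(real m + 1) / (b - a) < M" using j0 Mge by linarith
  then have big: "real m + 1 < (b - a) * M" using ab by (simp add: field_simps)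
  define k where "k = \<lfloor>a * M / real m\<rfloor>"
  define u where "u = int m * (k + 1) + 1"
  have k1: "real_of_int k \<le> a * M / real m" "a * M / real m < real_of_int k + 1" unfolding k_def by linarith+
  have "a * M < real m * (real_of_int k + 1)" using k1(2) m1 by (simp add: field_simps)
  then have lo: "a * M < of_int u" unfolding u_def by simp
  have "real m * real_of_int k \<le> a * M" using k1(1) m1 by (simp add: field_simps)
  then have "of_int u \<le> a * M + real m + 1" unfolding u_def by (simp add: algebra_simps)
  then have hi: "of_int u < b * M" using big by (simp add: algebra_simps)
  have "u mod int m = 1" unfolding u_def using m2 by (simp add: mod_add_left_eq[symmetric]) 
  moreover have "a < of_int u / M" using lo Mpos by (simp add: field_simps)
  moreover have "of_int u / M < b" using hi Mpos by (simp add: field_simps)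
  ultimately show ?thesis unfolding M_def j_def by (intro exI[of _ "Suc j0"] exI[of _ u]) auto
qed

lemma choose_psi:
  fixes m :: nat
  assumes "0 \<le> \<psi>" "\<psi> \<le> pi/2" "\<eta> > 0" "m \<ge> 2"
  shows "\<exists>\<psi>' j u. \<bar>\<psi>' - \<psi>\<bar> < \<eta> \<and> j \<ge> 1 \<and> u mod int m = 1 \<and>
            (cos \<psi>')^2 = of_int u / real m ^ j \<and> 0 \<le> of_int u / real m ^ j \<and> of_int u / real m ^ j \<le> 1"
proof -
  define e where "e = min (\<eta>/2) (pi/8)"
  have e0: "e > 0" "e < \<eta>" "e \<le> pi/8" using assms(3) by (auto simp: e_def min_def)
  obtain lo hi where lh: "0 \<le> lo" "lo < hi" "hi \<le> pi/2" "\<psi> - e \<le> lo" "hi \<le> \<psi> + e"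
  proof (cases "\<psi> \<le> pi/4")
    case True then show ?thesis using that[of \<psi> "\<psi> + e"] e0 assms by auto
  next
    case False then show ?thesis using that[of "\<psi> - e" \<psi>] e0 assms by auto
  qed
  have chl: "cos hi < cos lo" using lh by (intro cos_monotone_0_pi) auto
  have ch0: "0 \<le> cos hi" using lh by (intro cos_ge_zero) auto
  have f: "(cos hi)^2 < (cos lo)^2" using chl ch0 by (simp add: power_strict_mono)
  obtain j u where ju: "j \<ge> 1" "u mod int m = 1" "(cos hi)^2 < of_int u / real m ^ j" "of_int u / real m ^ j < (cos lo)^2"
    using special_rat[OF assms(4) f] by blast
  have "\<exists>x. lo \<le> x \<and> x \<le> hi \<and> (cos x)^2 = of_int u / real m ^ j"
    using ju(3,4) lh(2) by (intro IVT2) (auto intro!: continuous_intros)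
  then obtain x where x: "lo \<le> x" "x \<le> hi" "(cos x)^2 = of_int u / real m ^ j" by blast
  have "\<bar>x - \<psi>\<bar> < \<eta>" using x lh e0 by linarith
  moreover have "0 \<le> of_int u / real m ^ j" using ju(3) by (smt (verit) zero_le_power2)
  moreover have "of_int u / real m ^ j \<le> 1"
  proof -
    have "(cos lo)^2 \<le> 1" using abs_cos_le_one[of lo] by (simp add: abs_square_le_1)
    then show ?thesis using ju(4) by linarith
  qed
  ultimately show ?thesis using x ju by blast
qed

lemma cmod_sq_form: "(cmod (z + r *\<^sub>R y))^2 = (Re z + r * Re y)^2 + (Im z + r * Im y)^2"
  by (simp add: cmod_power2)
lemma cmod_sq_form': "(cmod (z - r *\<^sub>R y))^2 = (Re z - r * Re y)^2 + (Im z - r * Im y)^2"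
  by (simp add: cmod_power2)

lemma word_lower:
  fixes \<theta> r :: real and p R u :: int and qn v :: nat
  assumes cp: "cos \<theta> = of_int p / real qn" and q1: "qn \<ge> 1" and rdef: "r = real qn * sin \<theta>"
    and rR: "r * r = of_int R" and R1: "R \<ge> 1" and v1: "v \<ge> 1"
    and nd: "\<forall>n. \<not> (int v dvd u * int (qn^(2*n)))"
    and t0: "0 \<le> of_int u / real v" and t1: "of_int u / real v \<le> 1"
  shows "\<bar>(cmod (wp \<theta> 1 ws $1$1))^2 - of_int u / real v\<bar> \<ge> 1 / ((real v)^2 * real qn ^ (4 * word_cost ws))"
proof -
  define n where "n = word_cost ws"
  define K where "K = qn ^ (2*n)"
  have qpos: "real qn > 0" using q1 by simp
  have K1: "K \<ge> 1" unfolding K_def using q1 by simp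
  have Kr: "real K = (real qn ^ n)^2" unfolding K_def by (simp add: power_mult[symmetric] mult.commute)
  have "Phi (real qn) r n (\<lambda>s. wp \<theta> s ws)"
    unfolding n_def by (rule Phi_wp[OF cp _ rdef rR]) (use q1 in simp)
  then obtain P Q where PQ: "gim P" "gim Q"
    "wp \<theta> 1 ws = (1 / real qn ^ n) *\<^sub>R (P + r *\<^sub>R Q)"
    "wp \<theta> (-1) ws = (1 / real qn ^ n) *\<^sub>R (P - r *\<^sub>R Q)"
    unfolding Phi_def by blast
  define z where "z = P$1$1"
  define y where "y = Q$1$1"
  have W1: "wp \<theta> 1 ws $1$1 = (1 / real qn ^ n) *\<^sub>R (z + r *\<^sub>R y)" using PQ(3) by (simp add: z_def y_def)
  have W2: "wp \<theta> (-1) ws $1$1 = (1 / real qn ^ n) *\<^sub>R (z - r *\<^sub>R y)" using PQ(4) by (simp add: z_def y_def)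
  have gz: "gi z" and gy: "gi y" using PQ(1,2) by (simp_all add: gim_def z_def y_def)
  obtain a b c d where abcd: "Re z = of_int a" "Im z = of_int b" "Re y = of_int c" "Im y = of_int d"
    using gz gy unfolding gi_def by (metis Ints_cases)
  have "cmod (wp \<theta> (-1) ws $1$1) \<le> 1" by (rule unitary_entry[OF unitary_wp])
  then have "cmod (z - r *\<^sub>R y) / real qn ^ n \<le> 1" unfolding W2 using qpos by simp
  then have "cmod (z - r *\<^sub>R y) \<le> real qn ^ n" using qpos by (simp add: field_simps)
  then have "(cmod (z - r *\<^sub>R y))^2 \<le> (real qn ^ n)^2" by (simp add: power_mono)
  then have Xp: "(of_int a - r * of_int c)^2 + (of_int b - r * of_int d)^2 \<le> real K"
    unfolding cmod_sq_form' abcd Kr .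
  have r2: "r^2 = of_int R" using rR by (simp add: power2_eq_square)
  have key: "\<bar>(of_int a + r * of_int c)^2 + (of_int b + r * of_int d)^2 - (of_int u / real v) * real K\<bar>
           \<ge> 1 / ((real v)^2 * real K)"
    by (rule key_ineq[OF r2 R1 v1 K1 _ t0 t1 Xp]) (use nd K_def in blast)
  define X where "X = (of_int a + r * of_int c)^2 + (of_int b + r * of_int d)^2"
  have "(cmod (wp \<theta> 1 ws $1$1))^2 = (cmod (z + r *\<^sub>R y))^2 / (real qn ^ n)^2"
    unfolding W1 using qpos by (simp add: power_divide)
  then have cw: "(cmod (wp \<theta> 1 ws $1$1))^2 = X / real K" unfolding cmod_sq_form abcd Kr X_def .
  have Kpos: "real K > 0" using K1 by simp
  have "\<bar>X / real K - of_int u / real v\<bar> = \<bar>X - (of_int u / real v) * real K\<bar> / real K"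
  proof -
    have "X / real K - of_int u / real v = (X - (of_int u / real v) * real K) / real K"
      using Kpos by (simp add: field_simps)
    then show ?thesis using Kpos by (simp add: abs_divide)
  qed
  also have "\<dots> \<ge> (1 / ((real v)^2 * real K)) / real K"
    unfolding X_def by (rule divide_right_mono[OF key]) (use Kpos in simp)
  finally have "\<bar>X / real K - of_int u / real v\<bar> \<ge> 1 / ((real v)^2 * (real K * real K))"
    by (simp add: field_simps)
  moreover have "real K * real K = real qn ^ (4 * n)"
    unfolding K_def by (simp add: power_add[symmetric])
  ultimately show ?thesis unfolding cw n_def by simp
qed

lemma sq_diff_bound:
  fixes x y :: real
  assumes "0 \<le> x" "x \<le> 1" "0 \<le> y" "y \<le> 1"
  shows "\<bar>x^2 - y^2\<bar> \<le> 2 * \<bar>x - y\<bar>"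
proof -
  have "x^2 - y^2 = (x - y) * (x + y)" by (simp add: power2_eq_square algebra_simps)
  then have "\<bar>x^2 - y^2\<bar> = \<bar>x - y\<bar> * \<bar>x + y\<bar>" by (simp add: abs_mult)
  also have "\<bar>x + y\<bar> = x + y" using assms by simp
  finally have "\<bar>x^2 - y^2\<bar> = \<bar>x - y\<bar> * (x + y)" .
  also have "\<dots> \<le> \<bar>x - y\<bar> * 2" using assms by (intro mult_left_mono) auto
  finally show ?thesis by simp
qed

lemma final_ln:
  fixes N :: nat and D v \<epsilon> :: real
  assumes D1: "D > 1" and v1: "v \<ge> 1" and e0: "\<epsilon> > 0"
    and lt: "1 / (v^2 * D^N) < 2 * \<epsilon>"
  shows "real N > ln (1 / \<epsilon>) / ln D + (- (ln 2 + 2 * ln v) / ln D)"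
proof -
  have Dp: "D > 0" using D1 by simp
  have vp: "v > 0" using v1 by simp
  have pos: "v^2 * D^N > 0" using Dp vp by simp
  have "1 / (2 * \<epsilon>) < v^2 * D^N" using lt pos e0 by (simp add: field_simps)
  then have "ln (1 / (2 * \<epsilon>)) < ln (v^2 * D^N)" using e0 pos by (simp add: ln_less_cancel_iff)
  moreover have "ln (v^2 * D^N) = 2 * ln v + real N * ln D"
    using vp Dp by (simp add: ln_mult ln_realpow)
  moreover have "ln (1 / (2 * \<epsilon>)) = ln (1 / \<epsilon>) - ln 2"
    using e0 by (simp add: ln_div ln_mult)
  ultimately have "ln (1 / \<epsilon>) - ln 2 - 2 * ln v < real N * ln D" by linarith
  moreover have "ln D > 0" using D1 by simp
  ultimately have "(ln (1 / \<epsilon>) - ln 2 - 2 * ln v) / ln D < real N" by (simp add: field_simps)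
  moreover have "ln (1 / \<epsilon>) / ln D + (- (ln 2 + 2 * ln v) / ln D) = (ln (1 / \<epsilon>) - ln 2 - 2 * ln v) / ln D"
    using \<open>ln D > 0\<close> by (simp add: field_simps)
  ultimately show ?thesis by linarith
qed

theorem proposition3:
  fixes \<alpha> :: real
  assumes "cos (pi * \<alpha>) \<in> \<rat>"
    and "cos (pi * \<alpha>) \<notin> {0, 1, -1, 1/2, -1/2}"
  shows "\<forall>U \<in> SU2. \<forall>\<delta> > 0. \<exists>U' \<in> SU2. hs_norm (U' - U) < \<delta> \<and>
           (\<exists>D > 1. \<exists>c :: real. \<forall>\<^sub>F \<epsilon> in at_right 0.
              real (gate_complexity \<alpha> \<epsilon> U') > ln (1 / \<epsilon>) / ln D + c)"
proof (intro ballI allI impI)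
  fix U :: cmat2 and \<delta> :: real
  assume U: "U \<in> SU2" and \<delta>: "\<delta> > 0"
  define \<theta> where "\<theta> = pi * \<alpha>"
  have irr: "\<alpha> \<notin> \<rat>" using alpha_irrational assms by blast
  obtain p q0 where q0: "q0 > 0" "cos \<theta> = of_int p / of_int q0"
    using Rats_cases'[OF assms(1)] unfolding \<theta>_def by metis
  define qn where "qn = nat q0"
  have qnr: "real qn = of_int q0" using q0 by (simp add: qn_def)
  have cp: "cos \<theta> = of_int p / real qn" using q0 qnr by simp
  have qn1: "qn \<ge> 1" using q0 by (simp add: qn_def)
  have qn2: "qn \<ge> 2"
  proof (rule ccontr)
    assume "\<not> qn \<ge> 2"
    then have "qn = 1" using qn1 by simp
    then have cpi: "cos \<theta> = of_int p" using cp by simp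
    then have "\<bar>of_int p :: real\<bar> \<le> 1" using abs_cos_le_one[of \<theta>] by simp
    then have "p \<in> {-1, 0, 1}" by auto
    then show False using cpi assms(2) unfolding \<theta>_def by auto
  qed
  define r where "r = real qn * sin \<theta>"
  define R where "R = int qn ^ 2 - p ^ 2"
  have rR: "r * r = of_int R"
  proof -
    have "r * r = (real qn)^2 * (sin \<theta>)^2" unfolding r_def by (simp add: power2_eq_square)
    also have "\<dots> = (real qn)^2 * (1 - (cos \<theta>)^2)" by (simp add: sin_squared_eq)
    also have "\<dots> = (real qn)^2 - (of_int p)^2" unfolding cp using qn1 by (simp add: field_simps)
    finally show ?thesis unfolding R_def by simp
  qed
  have R1: "R \<ge> 1"
  proof -
    have "sin \<theta> \<noteq> 0"
    proof
      assume "sin \<theta> = 0"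
      then have "cos \<theta> = 1 \<or> cos \<theta> = -1" using sin_cos_squared_add[of \<theta>]
        by (simp add: power2_eq_1_iff)
      then show False using assms(2) unfolding \<theta>_def by auto
    qed
    then have "r \<noteq> 0" unfolding r_def using qn1 by simp
    then have "r * r > 0" by (auto simp: zero_less_mult_iff linorder_neq_iff)
    then have "of_int R > (0::real)" using rR by simp
    then show ?thesis by simp
  qed
  obtain a b where ab: "U = mk a b (- cnj b) (cnj a)" "(cmod a)^2 + (cmod b)^2 = 1"
    using SU2_form[OF U] by blast
  obtain \<phi>1 \<psi> \<phi>2 where eu: "0 \<le> \<psi>" "\<psi> \<le> pi/2" "U = Em \<phi>1 \<psi> \<phi>2"
    using euler[OF ab(2)] ab(1) by metis
  define m where "m = qn + 1"
  have m2: "m \<ge> 2" using qn1 by (simp add: m_def)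
  obtain \<psi>' j u where ps: "\<bar>\<psi>' - \<psi>\<bar> < \<delta>/6" "j \<ge> 1" "u mod int m = 1"
      "(cos \<psi>')^2 = of_int u / real m ^ j" "0 \<le> of_int u / real m ^ j" "of_int u / real m ^ j \<le> 1"
    using choose_psi[OF eu(1,2) _ m2, of "\<delta>/6"] \<delta> by auto
  define v where "v = m ^ j"
  have vr: "real v = real m ^ j" by (simp add: v_def)
  have v1: "v \<ge> 1" using m2 by (simp add: v_def)
  define t where "t = of_int u / real v"
  have t: "0 \<le> t" "t \<le> 1" "(cos \<psi>')^2 = t" using ps vr by (simp_all add: t_def)
  define U' where "U' = Em \<phi>1 \<psi>' \<phi>2"
  have U'SU: "U' \<in> SU2" by (simp add: U'_def Em_SU2)
  have close: "hs_norm (U' - U) < \<delta>"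
  proof -
    have "cmod (cis \<psi> - cis \<psi>') < \<delta>/6" using cis_dist[of \<psi> \<psi>'] ps(1) by (simp add: abs_minus_commute)
    then have "hs_norm (Em \<phi>1 \<psi>' \<phi>2 - Em \<phi>1 \<psi> \<phi>2) < 6 * (\<delta>/6)"
      using \<delta> by (intro Em_approx) auto
    then show ?thesis unfolding U'_def eu(3) by simp
  qed
  have nd: "\<forall>n. \<not> (int v dvd u * int (qn^(2*n)))"
  proof (intro allI notI)
    fix n assume dv: "int v dvd u * int (qn^(2*n))"
    have "int m dvd int v" unfolding v_def using ps(2) by (simp add: dvd_power)
    then have md: "int m dvd u * int (qn^(2*n))" using dv by (rule dvd_trans)
    have "coprime (int m) (int qn)" unfolding m_def using coprime_add_one_left[of "int qn"] by (simp add: add.commute)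
    then have "coprime (int m) (int (qn^(2*n)))" by simp
    then have "int m dvd u" using md by (simp add: coprime_dvd_mult_left_iff)
    then have "u mod int m = 0" by simp
    then show False using ps(3) by simp
  qed
  have U'11: "(cmod (U' $1$1))^2 = t"
    unfolding U'_def Em_def using t(3) by (simp add: norm_mult)
  define D :: real where "D = real qn ^ 4"
  have D1: "D > 1" unfolding D_def using qn2
    by (metis one_less_numeral_iff one_less_power of_nat_1 of_nat_less_iff order_less_le_trans semiring_norm(76) numeral_le_iff less_2_cases_iff one_less_of_natD le_eq_less_or_eq less_irrefl nat_le_real_less of_nat_numeral zero_less_numeral)
  define c where "c = - (ln 2 + 2 * ln (real v)) / ln D"
  have ev: "real (gate_complexity \<alpha> \<epsilon> U') > ln (1 / \<epsilon>) / ln D + c" if e0: "\<epsilon> > 0" for \<epsilon>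
  proof -
    have e6: "\<epsilon>/6 > 0" using e0 by simp
    obtain n1 where n1: "cmod (cis (real n1 * (pi * \<alpha>)) - cis \<phi>1) < \<epsilon>/6" using density_cis[OF irr e6] by blast
    obtain n2 where n2: "cmod (cis (real n2 * (pi * \<alpha>)) - cis \<psi>') < \<epsilon>/6" using density_cis[OF irr e6] by blast
    obtain n3 where n3: "cmod (cis (real n3 * (pi * \<alpha>)) - cis \<phi>2) < \<epsilon>/6" using density_cis[OF irr e6] by blast
    define ws1 :: "(nat \<times> int) list" where "ws1 = [(1, int n1), (2, int n2), (1, int n3)]"
    have "hs_norm (Em (real n1 * (pi*\<alpha>)) (real n2 * (pi*\<alpha>)) (real n3 * (pi*\<alpha>)) - Em \<phi>1 \<psi>' \<phi>2) < 6 * (\<epsilon>/6)"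
      using n1 n2 n3 by (intro Em_approx) (simp_all add: norm_minus_commute)
    then have "hs_norm (word_prod \<alpha> ws1 - U') < \<epsilon>" unfolding ws1_def word3 U'_def by simp
    moreover have "set ws1 \<subseteq> {1, 2} \<times> UNIV" by (simp add: ws1_def)
    ultimately have ex: "\<exists>c. \<exists>ws. set ws \<subseteq> {1, 2} \<times> UNIV \<and> word_cost ws = c \<and> hs_norm (word_prod \<alpha> ws - U') < \<epsilon>"
      by blast
    obtain ws0 where ws0: "set ws0 \<subseteq> {1, 2} \<times> UNIV" "word_cost ws0 = gate_complexity \<alpha> \<epsilon> U'"
        "hs_norm (word_prod \<alpha> ws0 - U') < \<epsilon>"
      using LeastI_ex[OF ex] unfolding gate_complexity_def by blast
    define N where "N = word_cost ws0"
    define W where "W = word_prod \<alpha> ws0"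
    have W: "W = wp \<theta> 1 ws0" unfolding W_def \<theta>_def by (rule word_prod_wp)
    have low: "\<bar>(cmod (W $1$1))^2 - t\<bar> \<ge> 1 / ((real v)^2 * real qn ^ (4 * N))"
      unfolding W t_def N_def
      by (rule word_lower[OF cp qn1 r_def rR R1 v1 nd]) (use t ps vr t_def in auto)
    have "cmod (W $1$1) \<le> 1" unfolding W by (rule unitary_entry[OF unitary_wp])
    moreover have "cmod (U' $1$1) \<le> 1" unfolding U'_def Em_def by (simp add: norm_mult abs_cos_le_one)
    ultimately have "\<bar>(cmod (W $1$1))^2 - (cmod (U' $1$1))^2\<bar> \<le> 2 * \<bar>cmod (W $1$1) - cmod (U' $1$1)\<bar>"
      by (intro sq_diff_bound) auto
    also have "\<dots> \<le> 2 * cmod (W $1$1 - U' $1$1)" by (simp add: norm_triangle_ineq3)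
    also have "\<dots> \<le> 2 * hs_norm (W - U')" using hs_norm_entry11[of "W - U'"] by simp
    also have "\<dots> < 2 * \<epsilon>" using ws0(3) unfolding W_def by simp
    finally have "1 / ((real v)^2 * real qn ^ (4 * N)) < 2 * \<epsilon>" using low U'11 by simp
    then have "1 / ((real v)^2 * D ^ N) < 2 * \<epsilon>" unfolding D_def by (simp add: power_mult)
    from final_ln[OF D1 _ e0 this] v1
    have "real N > ln (1 / \<epsilon>) / ln D + c" unfolding c_def by simp
    then show ?thesis using ws0(2) unfolding N_def by simp
  qed
  have "\<forall>\<^sub>F \<epsilon> in at_right 0. real (gate_complexity \<alpha> \<epsilon> U') > ln (1 / \<epsilon>) / ln D + c"
    using eventually_at_right_less[of "0::real"] by (rule eventually_mono) (use ev in auto)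
  then show "\<exists>U' \<in> SU2. hs_norm (U' - U) < \<delta> \<and>
           (\<exists>D > 1. \<exists>c :: real. \<forall>\<^sub>F \<epsilon> in at_right 0.
              real (gate_complexity \<alpha> \<epsilon> U') > ln (1 / \<epsilon>) / ln D + c)"
    using U'SU close D1 by blast
qed

end
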